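(* Let $G$ be a finite group and $\mathcal{P}$ a prime ideal of $\mathrm{Gh}(\underline{A}_G)$ with $\mathcal{P}(G/e)=(p)\subseteq\mathbb{Z}$ for a prime $p$. For $I\le G$ let $p_I\ge0$ be the integer with $\mathcal{P}(G/G)=\widetilde{A}(G)\cap\prod_{I\le G}p_I\mathbb{Z}$, and set $\mathscr{F}(\mathcal{P})=\{I\le G: p_I\ne1\}$. Then $\mathcal{P}=\mathcal{P}_{\mathscr{F}(\mathcal{P}),p}$.
   Context: For $H\le G$, $\widetilde{A}(H)$ is the subring of $\prod_{I\le H}\mathbb{Z}$ of tuples $(a_I)_{I\le H}$ with $a_{hIh^{-1}}=a_I$ for $h\in H$ (so $\widetilde{A}(e)=\mathbb{Z}$). $\mathrm{Gh}(\underline{A}_G)$ is the $G$-Tambara functor with $\mathrm{Gh}(\underline{A}_G)(G/H)=\widetilde{A}(H)$ and, for $H\le K$, $g\in G$, $I^g=g^{-1}Ig$: $\mathrm{res}^K_H(b)_L=b_L$; $\mathrm{tr}^K_H(a)_I=\sum_{kH\in K/H,\ I^k\le H}a_{I^k}$; $\mathrm{nm}^K_H(a)_I=\prod_{IgH\in I\backslash K/H}a_{I^g\cap H}$; $c_{g,H}(a)_J=a_{J^g}$ for $J\le gHg^{-1}$. For a set $\mathscr{F}$ of subgroups closed under conjugation and $p$ a prime or $0$, $\mathcal{P}_{\mathscr{F},p}(G/H)=\widetilde{A}(H)\cap\prod_{I\le H}\delta(I)\mathbb{Z}$ where $\delta(I)=p$ if $I\in\mathscr{F}$ and $1$ otherwise.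 A Tambara ideal is a collection of ideals $\mathcal{I}(G/H)$ closed under all restrictions, transfers, norms and conjugations; it is prime (Nakaoka) if it is not everything and whenever $a\in T(G/K_1)$, $b\in T(G/K_2)$ satisfy $\big(\mathrm{nm}^L_{g_1H_1g_1^{-1}}c_{g_1,H_1}\mathrm{res}^{K_1}_{H_1}(a)\big)\big(\mathrm{nm}^L_{g_2H_2g_2^{-1}}c_{g_2,H_2}\mathrm{res}^{K_2}_{H_2}(b)\big)\in\mathcal{I}(G/L)$ for all $L,H_1,H_2\le G$, $g_1,g_2\in G$ with $H_i\le K_i$, $g_iH_ig_i^{-1}\le L$, then $a\in\mathcal{I}(G/K_1)$ or $b\in\mathcal{I}(G/K_2)$. *)

theory Defs
  imports "HOL-Algebra.Group" "HOL-Computational_Algebra.Primes"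
begin

(* Elements of tilde-A(H) are functions a :: 'a set => int, vanishing off
   the subgroups I <= H, and invariant under H-conjugation. *)

definition sle :: "('a, 'b) monoid_scheme \<Rightarrow> 'a set \<Rightarrow> 'a set \<Rightarrow> bool" where
  "sle G I H \<longleftrightarrow> subgroup I G \<and> I \<subseteq> H"

(* conjg G g H = g H g^{-1};  I^g = g^{-1} I g = conjg G (inv g) I *)
definition conjg :: "('a, 'b) monoid_scheme \<Rightarrow> 'a \<Rightarrow> 'a set \<Rightarrow> 'a set" where
  "conjg G g H = (\<lambda>h. g \<otimes>\<^bsub>G\<^esub> h \<otimes>\<^bsub>G\<^esub> inv\<^bsub>G\<^esub> g) ` H"

definition Atil :: "('a, 'b) monoid_scheme \<Rightarrow> 'a set \<Rightarrow> ('a set \<Rightarrow> int) set" where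
  "Atil G H = {a. (\<forall>I. \<not> sle G I H \<longrightarrow> a I = 0) \<and>
                  (\<forall>h\<in>H. \<forall>I. sle G I H \<longrightarrow> a (conjg G h I) = a I)}"

definition lcos :: "('a, 'b) monoid_scheme \<Rightarrow> 'a \<Rightarrow> 'a set \<Rightarrow> 'a set" where
  "lcos G k H = (\<lambda>h. k \<otimes>\<^bsub>G\<^esub> h) ` H"

definition dcos :: "('a, 'b) monoid_scheme \<Rightarrow> 'a set \<Rightarrow> 'a \<Rightarrow> 'a set \<Rightarrow> 'a set" where
  "dcos G I g H = {i \<otimes>\<^bsub>G\<^esub> g \<otimes>\<^bsub>G\<^esub> h | i h. i \<in> I \<and> h \<in> H}"

definition res :: "('a, 'b) monoid_scheme \<Rightarrow> 'a set \<Rightarrow> ('a set \<Rightarrow> int) \<Rightarrow> ('a set \<Rightarrow> int)" where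
  "res G H b = (\<lambda>L. if sle G L H then b L else 0)"

(* tr^K_H(a)_I = sum over kH in K/H with I^k <= H of a_{I^k} *)
definition tr :: "('a, 'b) monoid_scheme \<Rightarrow> 'a set \<Rightarrow> 'a set \<Rightarrow> ('a set \<Rightarrow> int) \<Rightarrow> ('a set \<Rightarrow> int)" where
  "tr G K H a = (\<lambda>I. if sle G I K then
      (\<Sum>C\<in>{lcos G k H | k. k \<in> K}.
         (let k = (SOME k. k \<in> C) in
            if conjg G (inv\<^bsub>G\<^esub> k) I \<subseteq> H then a (conjg G (inv\<^bsub>G\<^esub> k) I) else 0))
     else 0)"

(* nm^K_H(a)_I = product over IgH in I\K/H of a_{I^g \<inter> H} *)
definition nm :: "('a, 'b) monoid_scheme \<Rightarrow> 'a set \<Rightarrow> 'a set \<Rightarrow> ('a set \<Rightarrow> int) \<Rightarrow> ('a set \<Rightarrow> int)" where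
  "nm G K H a = (\<lambda>I. if sle G I K then
      (\<Prod>D\<in>{dcos G I g H | g. g \<in> K}.
         (let g = (SOME g. g \<in> D) in a (conjg G (inv\<^bsub>G\<^esub> g) I \<inter> H)))
     else 0)"

definition cg :: "('a, 'b) monoid_scheme \<Rightarrow> 'a \<Rightarrow> 'a set \<Rightarrow> ('a set \<Rightarrow> int) \<Rightarrow> ('a set \<Rightarrow> int)" where
  "cg G g H a = (\<lambda>J. if sle G J (conjg G g H) then a (conjg G (inv\<^bsub>G\<^esub> g) J) else 0)"

definition is_ideal :: "('a, 'b) monoid_scheme \<Rightarrow> 'a set \<Rightarrow> ('a set \<Rightarrow> int) set \<Rightarrow> bool" where
  "is_ideal G H J \<longleftrightarrow> J \<subseteq> Atil G H \<and> (\<lambda>_. 0) \<in> J \<and>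
     (\<forall>a\<in>J. \<forall>b\<in>J. (\<lambda>I. a I + b I) \<in> J) \<and>
     (\<forall>a\<in>J. \<forall>r\<in>Atil G H. (\<lambda>I. r I * a I) \<in> J)"

(* Tambara ideal of Gh(A_G); P H is the value at G/H *)
definition tambara_ideal :: "('a, 'b) monoid_scheme \<Rightarrow> ('a set \<Rightarrow> ('a set \<Rightarrow> int) set) \<Rightarrow> bool" where
  "tambara_ideal G P \<longleftrightarrow>
     (\<forall>H. subgroup H G \<longrightarrow> is_ideal G H (P H)) \<and>
     (\<forall>H K. subgroup H G \<longrightarrow> subgroup K G \<longrightarrow> H \<subseteq> K \<longrightarrow>
        (\<forall>b\<in>P K. res G H b \<in> P H) \<and>
        (\<forall>a\<in>P H. tr G K H a \<in> P K \<and> nm G K H a \<in> P K)) \<and>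
     (\<forall>g\<in>carrier G. \<forall>H. subgroup H G \<longrightarrow> (\<forall>a\<in>P H. cg G g H a \<in> P (conjg G g H)))"

definition nakaoka_prime :: "('a, 'b) monoid_scheme \<Rightarrow> ('a set \<Rightarrow> ('a set \<Rightarrow> int) set) \<Rightarrow> bool" where
  "nakaoka_prime G P \<longleftrightarrow> tambara_ideal G P \<and>
     (\<exists>H. subgroup H G \<and> P H \<noteq> Atil G H) \<and>
     (\<forall>K1 K2 a b. subgroup K1 G \<longrightarrow> subgroup K2 G \<longrightarrow> a \<in> Atil G K1 \<longrightarrow> b \<in> Atil G K2 \<longrightarrow>
        (\<forall>L H1 H2 g1 g2. subgroup L G \<longrightarrow> subgroup H1 G \<longrightarrow> subgroup H2 G \<longrightarrow>
           g1 \<in> carrier G \<longrightarrow> g2 \<in> carrier G \<longrightarrow> H1 \<subseteq> K1 \<longrightarrow> H2 \<subseteq> K2 \<longrightarrow>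
           conjg G g1 H1 \<subseteq> L \<longrightarrow> conjg G g2 H2 \<subseteq> L \<longrightarrow>
           (\<lambda>I. nm G L (conjg G g1 H1) (cg G g1 H1 (res G H1 a)) I *
                nm G L (conjg G g2 H2) (cg G g2 H2 (res G H2 b)) I) \<in> P L) \<longrightarrow>
        a \<in> P K1 \<or> b \<in> P K2)"

definition Pfp :: "('a, 'b) monoid_scheme \<Rightarrow> 'a set set \<Rightarrow> int \<Rightarrow> 'a set \<Rightarrow> ('a set \<Rightarrow> int) set" where
  "Pfp G F p H = {a \<in> Atil G H. \<forall>I. sle G I H \<longrightarrow> (if I \<in> F then p else 1) dvd a I}"

end

theory Submission
  imports Defs
begin

context group begin

lemma inv_cancel_l[simp]: "g \<in> carrier G \<Longrightarrow> z \<in> carrier G \<Longrightarrow> inv g \<otimes> (g \<otimes> z) = z"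
  by (simp add: m_assoc[symmetric])

lemma inv_cancel_r[simp]: "g \<in> carrier G \<Longrightarrow> z \<in> carrier G \<Longrightarrow> g \<otimes> (inv g \<otimes> z) = z"
  by (simp add: m_assoc[symmetric])

lemma conjg_closed: "g \<in> carrier G \<Longrightarrow> X \<subseteq> carrier G \<Longrightarrow> conjg G g X \<subseteq> carrier G"
  unfolding conjg_def by auto

lemma conjg_comp: "g \<in> carrier G \<Longrightarrow> h \<in> carrier G \<Longrightarrow> X \<subseteq> carrier G \<Longrightarrow>
   conjg G g (conjg G h X) = conjg G (g \<otimes> h) X"
  unfolding conjg_def image_image
  by (rule image_cong) (auto simp: inv_mult_group m_assoc subsetD)

lemma conjg_one: "X \<subseteq> carrier G \<Longrightarrow> conjg G \<one> X = X"
  unfolding conjg_def by (auto simp: subsetD)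

lemma conjg_inv_conjg: "g \<in> carrier G \<Longrightarrow> X \<subseteq> carrier G \<Longrightarrow> conjg G (inv g) (conjg G g X) = X"
  by (simp add: conjg_comp conjg_one)

lemma conjg_conjg_inv: "g \<in> carrier G \<Longrightarrow> X \<subseteq> carrier G \<Longrightarrow> conjg G g (conjg G (inv g) X) = X"
  by (simp add: conjg_comp conjg_one)

lemma conjg_mono: "X \<subseteq> Y \<Longrightarrow> conjg G g X \<subseteq> conjg G g Y"
  unfolding conjg_def by auto

lemma conjg_subgroup: assumes "g \<in> carrier G" "subgroup I G" shows "subgroup (conjg G g I) G"
proof -
  have sub: "I \<subseteq> carrier G" using assms(2) subgroup.subset by blast
  show ?thesis
  proof (rule subgroup.intro)
    show "conjg G g I \<subseteq> carrier G" using conjg_closed[OF assms(1) sub] .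
  next
    fix x y assume "x \<in> conjg G g I" "y \<in> conjg G g I"
    then obtain a b where ab: "a \<in> I" "b \<in> I" "x = g \<otimes> a \<otimes> inv g" "y = g \<otimes> b \<otimes> inv g"
      unfolding conjg_def by auto
    have "a \<in> carrier G" "b \<in> carrier G" using ab sub by auto
    then have "x \<otimes> y = g \<otimes> (a \<otimes> b) \<otimes> inv g" using ab assms(1)
      by (simp add: m_assoc)
    moreover have "a \<otimes> b \<in> I" using ab assms(2) by (simp add: subgroup.m_closed)
    ultimately show "x \<otimes> y \<in> conjg G g I" unfolding conjg_def by auto
  next
    have "\<one> = g \<otimes> \<one> \<otimes> inv g" using assms(1) by simp
    moreover have "\<one> \<in> I" using assms(2) by (simp add: subgroup.one_closed)
    ultimately show "\<one> \<in> conjg G g I" unfolding conjg_def by blast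
  next
    fix x assume "x \<in> conjg G g I"
    then obtain a where a: "a \<in> I" "x = g \<otimes> a \<otimes> inv g" unfolding conjg_def by auto
    have ac: "a \<in> carrier G" using a sub by auto
    then have "inv x = g \<otimes> inv a \<otimes> inv g" using a assms(1)
      by (simp add: inv_mult_group m_assoc)
    moreover have "inv a \<in> I" using a assms(2) by (simp add: subgroup.m_inv_closed)
    ultimately show "inv x \<in> conjg G g I" unfolding conjg_def by auto
  qed
qed

lemma conjg_self: assumes "subgroup J G" "h \<in> J" shows "conjg G h J = J"
proof -
  interpret J: subgroup J G by fact
  have hc: "h \<in> carrier G" using assms J.subset by blast
  have "conjg G h J \<subseteq> J"
  proof
    fix y assume "y \<in> conjg G h J"
    then obtain x where x: "x \<in> J" "y = h \<otimes> x \<otimes> inv h" unfolding conjg_def by auto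
    have "h \<otimes> x \<in> J" using x assms(2) by (rule_tac J.m_closed) auto
    then show "y \<in> J" using x assms(2) by (simp add: J.m_closed J.m_inv_closed)
  qed
  moreover have "J \<subseteq> conjg G h J"
  proof
    fix x assume x: "x \<in> J"
    have xc: "x \<in> carrier G" using x J.subset by blast
    have "inv h \<otimes> x \<in> J" using assms x by (simp add: J.m_closed J.m_inv_closed)
    then have "inv h \<otimes> x \<otimes> inv (inv h) \<in> J" using assms x by (simp add: J.m_closed J.m_inv_closed)
    moreover have "x = h \<otimes> (inv h \<otimes> x \<otimes> inv (inv h)) \<otimes> inv h" using hc xc
      by (simp add: m_assoc)
    ultimately show "x \<in> conjg G h J" unfolding conjg_def by blast
  qed
  ultimately show ?thesis by blast
qed

lemma conjg_card: assumes "g \<in> carrier G" "X \<subseteq> carrier G" shows "card (conjg G g X) = card X"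
proof -
  have "inj_on (\<lambda>h. g \<otimes> h \<otimes> inv g) X"
  proof (rule inj_onI)
    fix a b assume "a \<in> X" "b \<in> X" "g \<otimes> a \<otimes> inv g = g \<otimes> b \<otimes> inv g"
    then have "inv g \<otimes> (g \<otimes> a \<otimes> inv g) \<otimes> g = inv g \<otimes> (g \<otimes> b \<otimes> inv g) \<otimes> g" by simp
    moreover have "a \<in> carrier G" "b \<in> carrier G" using assms \<open>a \<in> X\<close> \<open>b \<in> X\<close> by auto
    ultimately show "a = b" using assms by (simp add: m_assoc)
  qed
  then show ?thesis unfolding conjg_def by (rule card_image)
qed

end

lemma Atil_scale: "f \<in> Atil G L \<Longrightarrow> (\<lambda>K. c * f K) \<in> Atil G L"
  unfolding Atil_def by auto

lemma Atil_mult: "f \<in> Atil G L \<Longrightarrow> g \<in> Atil G L \<Longrightarrow> (\<lambda>K. f K * g K) \<in> Atil G L"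
  unfolding Atil_def by auto

lemma AtilD1: "f \<in> Atil G L \<Longrightarrow> \<not> sle G I L \<Longrightarrow> f I = 0"
  unfolding Atil_def by auto

lemma AtilD2: "f \<in> Atil G L \<Longrightarrow> h \<in> L \<Longrightarrow> sle G I L \<Longrightarrow> f (conjg G h I) = f I"
  unfolding Atil_def by auto

lemma sle_carrier: "sle G K L \<Longrightarrow> K \<subseteq> carrier G"
  unfolding sle_def by (simp add: subgroup.subset)

lemma sub_carrier: "subgroup L G \<Longrightarrow> h \<in> L \<Longrightarrow> h \<in> carrier G"
  using subgroup.subset by fastforce

definition cls :: "('a, 'b) monoid_scheme \<Rightarrow> 'a set \<Rightarrow> 'a set \<Rightarrow> 'a set set" where
  "cls G L J = {K. sle G K L \<and> (\<exists>h\<in>L. K = conjg G h J)}"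

context group begin

lemma sle_conjg: assumes "subgroup L G" "h \<in> L" "sle G I L" shows "sle G (conjg G h I) L"
proof -
  have hc: "h \<in> carrier G" using assms(1,2) by (rule sub_carrier)
  have "conjg G h I \<subseteq> conjg G h L" using assms(3) unfolding sle_def by (simp add: conjg_mono)
  also have "\<dots> = L" using conjg_self assms by simp
  finally show ?thesis using assms(3) conjg_subgroup[OF hc] unfolding sle_def by simp
qed

lemma cls_conj: assumes "subgroup L G" "h \<in> L" "sle G I L" "J \<subseteq> carrier G"
  shows "(conjg G h I \<in> cls G L J) = (I \<in> cls G L J)"
proof -
  interpret L: subgroup L G by fact
  have hc: "h \<in> carrier G" using assms(2) L.subset by blast
  have Ic: "I \<subseteq> carrier G" using assms(3) by (rule sle_carrier)
  show ?thesis
  proof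
    assume "conjg G h I \<in> cls G L J"
    then obtain h0 where h0: "h0 \<in> L" "conjg G h I = conjg G h0 J" unfolding cls_def by auto
    have h0c: "h0 \<in> carrier G" using h0 L.subset by blast
    have "I = conjg G (inv h) (conjg G h I)" using conjg_inv_conjg[OF hc Ic] by simp
    also have "\<dots> = conjg G (inv h \<otimes> h0) J" using h0 conjg_comp[of "inv h" h0 J] hc h0c assms(4) by simp
    finally show "I \<in> cls G L J" unfolding cls_def using assms(3) h0 assms(2)
      by (auto intro!: bexI[of _ "inv h \<otimes> h0"])
  next
    assume "I \<in> cls G L J"
    then obtain h0 where h0: "h0 \<in> L" "I = conjg G h0 J" unfolding cls_def by auto
    have h0c: "h0 \<in> carrier G" using h0 L.subset by blast
    have "conjg G h I = conjg G (h \<otimes> h0) J" using h0 conjg_comp[of h h0 J] hc h0c assms(4) by simp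
    then show "conjg G h I \<in> cls G L J" unfolding cls_def using sle_conjg[OF assms(1-3)] h0 assms(2)
      by (auto intro!: bexI[of _ "h \<otimes> h0"])
  qed
qed

lemma ind_Atil: assumes "subgroup L G" "J \<subseteq> carrier G"
  shows "(\<lambda>K. if K \<in> cls G L J then c else 0) \<in> Atil G L"
proof -
  have "\<forall>I. \<not> sle G I L \<longrightarrow> I \<notin> cls G L J" unfolding cls_def by simp
  moreover have "\<forall>h\<in>L. \<forall>I. sle G I L \<longrightarrow> (conjg G h I \<in> cls G L J) = (I \<in> cls G L J)"
    using cls_conj[OF assms(1) _ _ assms(2)] by simp
  ultimately show ?thesis unfolding Atil_def by simp
qed

lemma self_cls: assumes "sle G J L" "subgroup L G" shows "J \<in> cls G L J"
proof -
  have "J \<subseteq> carrier G" using assms(1) by (rule sle_carrier)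
  then have "J = conjg G \<one> J" by (simp add: conjg_one)
  moreover have "\<one> \<in> L" using assms(2) by (simp add: subgroup.one_closed)
  ultimately show ?thesis unfolding cls_def using assms(1) by blast
qed

lemma cls_val: assumes "f \<in> Atil G L" "K \<in> cls G L J" "sle G J L" shows "f K = f J"
proof -
  obtain h where "h \<in> L" "K = conjg G h J" using assms(2) unfolding cls_def by blast
  then show ?thesis using AtilD2[OF assms(1) _ assms(3)] by simp
qed

lemma finite_sle: assumes "finite (carrier G)" shows "finite {K. sle G K L}"
proof -
  have "{K. sle G K L} \<subseteq> Pow (carrier G)" unfolding sle_def by (auto dest: subgroup.subset)
  then show ?thesis using assms by (meson finite_Pow_iff finite_subset)
qed

lemma coord_lemma:
  assumes fin: "finite (carrier G)" and L: "subgroup L G" and Q: "is_ideal G L Q"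
  shows "Y \<in> Atil G L \<Longrightarrow> (\<forall>J. sle G J L \<longrightarrow> (\<exists>z\<in>Q. z J dvd Y J)) \<Longrightarrow> Y \<in> Q"
proof (induction "card {K. Y K \<noteq> 0}" arbitrary: Y rule: less_induct)
  case less
  have supp_sub: "{K. Y K \<noteq> 0} \<subseteq> {K. sle G K L}" using less.prems(1) AtilD1 by blast
  have finS: "finite {K. Y K \<noteq> 0}" using finite_subset[OF supp_sub finite_sle[OF fin]] .
  show ?case
  proof (cases "{K. Y K \<noteq> 0} = {}")
    case True
    then have "Y = (\<lambda>_. 0)" by auto
    then show ?thesis using Q unfolding is_ideal_def by simp
  next
    case False
    then obtain J where J: "Y J \<noteq> 0" by auto
    then have sJ: "sle G J L" using supp_sub by auto
    have Jc: "J \<subseteq> carrier G" using sJ by (rule sle_carrier)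
    obtain z where z: "z \<in> Q" "z J dvd Y J" using less.prems(2) sJ by blast
    have zA: "z \<in> Atil G L" using z Q unfolding is_ideal_def by auto
    define r where "r = (\<lambda>K. (if K \<in> cls G L J then Y J div z J else 0))"
    have rA: "r \<in> Atil G L" unfolding r_def by (rule ind_Atil[OF L Jc])
    have rz: "(\<lambda>K. r K * z K) \<in> Q" using Q rA z unfolding is_ideal_def by blast
    define Y' where "Y' = (\<lambda>K. if K \<in> cls G L J then 0 else Y K)"
    have Y'A: "Y' \<in> Atil G L"
      unfolding Atil_def Y'_def using less.prems(1) cls_conj[OF L _ _ Jc]
      by (auto simp: AtilD1 AtilD2)
    have sub: "{K. Y' K \<noteq> 0} \<subset> {K. Y K \<noteq> 0}"
      using J self_cls[OF sJ L] unfolding Y'_def by auto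
    have "card {K. Y' K \<noteq> 0} < card {K. Y K \<noteq> 0}" using psubset_card_mono[OF finS sub] .
    moreover have "\<forall>J. sle G J L \<longrightarrow> (\<exists>z\<in>Q. z J dvd Y' J)"
    proof (intro allI impI)
      fix J' assume "sle G J' L"
      then obtain z' where "z' \<in> Q" "z' J' dvd Y J'" using less.prems(2) by blast
      then show "\<exists>z\<in>Q. z J' dvd Y' J'" unfolding Y'_def by (cases "J' \<in> cls G L J") auto
    qed
    ultimately have Y'Q: "Y' \<in> Q" using less.hyps[OF _ Y'A] by simp
    have "Y = (\<lambda>K. Y' K + r K * z K)"
    proof
      fix K show "Y K = Y' K + r K * z K"
      proof (cases "K \<in> cls G L J")
        case True
        then have "Y K = Y J" "z K = z J" using cls_val[OF less.prems(1) _ sJ] cls_val[OF zA _ sJ] by auto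
        then show ?thesis using True z(2) unfolding Y'_def r_def by simp
      qed (simp add: Y'_def r_def)
    qed
    then show ?thesis using Q Y'Q rz unfolding is_ideal_def by metis
  qed
qed

end

lemma res_scale: "res G H (\<lambda>I. x * f I) = (\<lambda>K. x * res G H f K)"
  unfolding res_def by auto

lemma res_mult: "res G H (\<lambda>I. f I * g I) = (\<lambda>K. res G H f K * res G H g K)"
  unfolding res_def by auto

lemma nm_scale: "nm G K H (\<lambda>I. x * f I) I = x ^ card {dcos G I g H | g. g \<in> K} * nm G K H f I"
  unfolding nm_def Let_def by (simp add: prod.distrib)

lemma nm_mult: "nm G K H (\<lambda>I. f I * g I) I = nm G K H f I * nm G K H g I"
  unfolding nm_def Let_def by (simp add: prod.distrib)

lemma nm_mult_fun: "nm G K H (\<lambda>I. f I * g I) = (\<lambda>I. nm G K H f I * nm G K H g I)"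
  using nm_mult by blast

lemma nm_vanish: "\<not> sle G I K \<Longrightarrow> nm G K H f I = 0"
  unfolding nm_def by simp

lemma Atil_quot:
  assumes "(\<lambda>I. f I * d I) \<in> Atil G L" "d \<in> Atil G L" "\<forall>I. sle G I L \<longrightarrow> d I \<noteq> 0"
    "\<forall>I. \<not> sle G I L \<longrightarrow> f I = 0"
  shows "f \<in> Atil G L"
  unfolding Atil_def
proof (intro CollectI conjI allI ballI impI)
  fix I assume "\<not> sle G I L" then show "f I = 0" using assms(4) by simp
next
  fix h I assume h: "h \<in> L" and I: "sle G I L"
  have "f (conjg G h I) * d (conjg G h I) = f I * d I"
    using AtilD2[OF assms(1) h I] by simp
  moreover have "d (conjg G h I) = d I" using AtilD2[OF assms(2) h I] .
  ultimately show "f (conjg G h I) = f I" using assms(3) I by simp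
qed

context group begin

lemma dcos_sub: assumes "I \<subseteq> N" "H \<subseteq> N" "g \<in> N" "subgroup N G" shows "dcos G I g H \<subseteq> N"
proof
  fix x assume "x \<in> dcos G I g H"
  then obtain i h where "i \<in> I" "h \<in> H" "x = i \<otimes> g \<otimes> h" unfolding dcos_def by blast
  then show "x \<in> N" using assms by (simp add: subgroup.m_closed subsetD)
qed

lemma dcos_mem: assumes "subgroup I G" "subgroup H G" "g \<in> carrier G" shows "g \<in> dcos G I g H"
proof -
  have "g = \<one> \<otimes> g \<otimes> \<one>" using assms(3) by simp
  moreover have "\<one> \<in> I" "\<one> \<in> H" using assms(1,2) by (simp_all add: subgroup.one_closed)
  ultimately show ?thesis unfolding dcos_def by blast
qed

lemma dcos_some: assumes "subgroup I G" "subgroup H G" "g \<in> carrier G"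
  shows "(SOME x. x \<in> dcos G I g H) \<in> dcos G I g H"
  using dcos_mem[OF assms] by (rule someI)

lemma dcos_some_N: assumes "subgroup I G" "subgroup H G" "g \<in> N" "subgroup N G" "I \<subseteq> N" "H \<subseteq> N"
  shows "(SOME x. x \<in> dcos G I g H) \<in> N"
  using dcos_some[OF assms(1,2) sub_carrier[OF assms(4,3)]] dcos_sub[OF assms(5,6,3,4)] by blast

lemma finite_dcos_set: assumes "finite (carrier G)" "subgroup N G" "I \<subseteq> N" "H \<subseteq> N"
  shows "finite {dcos G I g H | g. g \<in> N}"
proof -
  have "{dcos G I g H | g. g \<in> N} \<subseteq> Pow N" using dcos_sub[OF assms(3,4) _ assms(2)] by blast
  moreover have "finite N" using assms(1) subgroup.subset[OF assms(2)] by (rule finite_subset[rotated])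
  ultimately show ?thesis by (meson finite_Pow_iff finite_subset)
qed

lemma cg_res: assumes "a \<in> Atil G (carrier G)" "g \<in> carrier G" "subgroup H G"
  shows "cg G g H (res G H a) = res G (conjg G g H) a"
proof
  fix J
  show "cg G g H (res G H a) J = res G (conjg G g H) a J"
  proof (cases "sle G J (conjg G g H)")
    case True
    have Hc: "H \<subseteq> carrier G" using assms(3) by (rule subgroup.subset)
    have Js: "subgroup J G" "J \<subseteq> conjg G g H" using True unfolding sle_def by auto
    have "conjg G (inv g) J \<subseteq> conjg G (inv g) (conjg G g H)" using Js(2) by (rule conjg_mono)
    also have "\<dots> = H" using conjg_inv_conjg[OF assms(2) Hc] .
    finally have "sle G (conjg G (inv g) J) H" unfolding sle_def
      using conjg_subgroup[OF inv_closed[OF assms(2)] Js(1)] by simp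
    moreover have "a (conjg G (inv g) J) = a J"
      using AtilD2[OF assms(1) inv_closed[OF assms(2)]] Js(1) subgroup.subset[OF Js(1)] unfolding sle_def
      by simp
    ultimately show ?thesis using True unfolding cg_def res_def by simp
  qed (simp add: cg_def res_def)
qed

lemma nm_res_nonzero:
  assumes fin: "finite (carrier G)" and L: "subgroup L G" and H: "subgroup H G" "H \<subseteq> L"
    and d: "\<forall>K. subgroup K G \<longrightarrow> d K \<noteq> 0" and I: "sle G I L"
  shows "nm G L H (res G H d) I \<noteq> 0"
proof -
  have Is: "subgroup I G" "I \<subseteq> L" using I unfolding sle_def by auto
  have "(\<Prod>D\<in>{dcos G I g H | g. g \<in> L}. (let g = (SOME g. g \<in> D) in res G H d (conjg G (inv g) I \<inter> H))) \<noteq> 0"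
  proof (subst prod_zero_iff[OF finite_dcos_set[OF fin L Is(2) H(2)]], safe)
    fix g assume g: "g \<in> L"
    let ?x = "SOME x. x \<in> dcos G I g H"
    have xc: "?x \<in> carrier G" using dcos_some_N[OF Is(1) H(1) g L Is(2) H(2)] by (rule sub_carrier[OF L])
    have "subgroup (conjg G (inv ?x) I \<inter> H) G"
      using subgroups_Inter_pair[OF conjg_subgroup[OF inv_closed[OF xc] Is(1)] H(1)] .
    then have "sle G (conjg G (inv ?x) I \<inter> H) H" unfolding sle_def by simp
    moreover assume "(let g = ?x in res G H d (conjg G (inv g) I \<inter> H)) = 0"
    ultimately show False using d \<open>subgroup (conjg G (inv ?x) I \<inter> H) G\<close> unfolding res_def Let_def by simp
  qed
  then show ?thesis unfolding nm_def using I by simp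
qed

end

locale tset = group G for G :: "('a, 'b) monoid_scheme" (structure) +
  fixes P :: "'a set \<Rightarrow> ('a set \<Rightarrow> int) set" and p :: int and pI :: "'a set \<Rightarrow> int"
  assumes fin: "finite (carrier G)"
    and nk: "nakaoka_prime G P"
    and pp: "prime p"
    and Pe: "P {\<one>} = {a \<in> Atil G {\<one>}. p dvd a {\<one>}}"
    and pos: "\<forall>I. subgroup I G \<longrightarrow> pI I \<ge> 0"
    and pinv: "\<forall>g\<in>carrier G. \<forall>I. subgroup I G \<longrightarrow> pI (conjg G g I) = pI I"
    and PG: "P (carrier G) = {a \<in> Atil G (carrier G). \<forall>I. subgroup I G \<longrightarrow> pI I dvd a I}"
begin

lemma TI: "tambara_ideal G P" using nk unfolding nakaoka_prime_def by simp

lemma ideal_P: "subgroup H G \<Longrightarrow> is_ideal G H (P H)"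
  using TI unfolding tambara_ideal_def by simp

lemma P_Atil: "subgroup H G \<Longrightarrow> a \<in> P H \<Longrightarrow> a \<in> Atil G H"
  using ideal_P unfolding is_ideal_def by blast

lemma P_mult: "subgroup H G \<Longrightarrow> r \<in> Atil G H \<Longrightarrow> a \<in> P H \<Longrightarrow> (\<lambda>I. r I * a I) \<in> P H"
  using ideal_P unfolding is_ideal_def by blast

lemma P_res: "subgroup H G \<Longrightarrow> subgroup K G \<Longrightarrow> H \<subseteq> K \<Longrightarrow> b \<in> P K \<Longrightarrow> res G H b \<in> P H"
  using TI unfolding tambara_ideal_def by blast

lemma P_tr: "subgroup H G \<Longrightarrow> subgroup K G \<Longrightarrow> H \<subseteq> K \<Longrightarrow> a \<in> P H \<Longrightarrow> tr G K H a \<in> P K"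
  using TI unfolding tambara_ideal_def by blast

lemma P_nm: "subgroup H G \<Longrightarrow> subgroup K G \<Longrightarrow> H \<subseteq> K \<Longrightarrow> a \<in> P H \<Longrightarrow> nm G K H a \<in> P K"
  using TI unfolding tambara_ideal_def by blast

lemma sle_carrier_iff: "sle G K (carrier G) = subgroup K G"
  unfolding sle_def using subgroup.subset by auto

lemma pI_dvd_pow: assumes I0: "subgroup I0 G" shows "\<exists>n. pI I0 dvd p ^ n"
proof -
  define a0 where "a0 = (\<lambda>K::'a set. if K = {\<one>} then p else 0)"
  have sle1: "sle G {\<one>} {\<one>}" unfolding sle_def using triv_subgroup by simp
  have "a0 \<in> Atil G {\<one>}"
    unfolding Atil_def
  proof (intro CollectI conjI allI impI ballI)
    fix I assume "\<not> sle G I {\<one>}" then show "a0 I = 0" using sle1 unfolding a0_def by auto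
  next
    fix h I assume "h \<in> {\<one>}" "sle G I {\<one>}"
    then show "a0 (conjg G h I) = a0 I" using conjg_one[OF sle_carrier] by simp
  qed
  then have a0P: "a0 \<in> P {\<one>}" using Pe unfolding a0_def by simp
  have nP: "nm G (carrier G) {\<one>} a0 \<in> P (carrier G)"
    using P_nm[OF triv_subgroup subgroup_self _ a0P] by simp
  let ?S = "{dcos G I0 g {\<one>} | g. g \<in> carrier G}"
  have sI0: "sle G I0 (carrier G)" using sle_carrier_iff I0 by simp
  have "nm G (carrier G) {\<one>} a0 I0 = (\<Prod>D\<in>?S. p)"
    unfolding nm_def if_P[OF sI0]
  proof (intro prod.cong refl)
    fix D assume "D \<in> ?S"
    then obtain g where g: "g \<in> carrier G" "D = dcos G I0 g {\<one>}" by blast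
    let ?x = "SOME x. x \<in> D"
    have xc: "?x \<in> carrier G" using dcos_some_N[OF I0 triv_subgroup g(1) subgroup_self] I0 g
      by (simp add: subgroup.subset)
    have "\<one> \<in> conjg G (inv ?x) I0"
      using conjg_subgroup[OF inv_closed[OF xc] I0] by (simp add: subgroup.one_closed)
    then have "conjg G (inv ?x) I0 \<inter> {\<one>} = {\<one>}" by auto
    then show "(let g = ?x in a0 (conjg G (inv g) I0 \<inter> {\<one>})) = p" unfolding a0_def Let_def by simp
  qed
  then have "nm G (carrier G) {\<one>} a0 I0 = p ^ card ?S" by simp
  moreover have "pI I0 dvd nm G (carrier G) {\<one>} a0 I0" using nP PG I0 by auto
  ultimately have "pI I0 dvd p ^ card ?S" by simp
  then show ?thesis by (rule exI)
qed

lemma pI_nonzero: assumes "subgroup I0 G" shows "pI I0 \<noteq> 0"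
proof
  assume "pI I0 = 0"
  moreover obtain n where "pI I0 dvd p ^ n" using pI_dvd_pow[OF assms] by blast
  ultimately show False using pp by (simp add: prime_gt_0_int)
qed

definition cvec :: "'a set \<Rightarrow> int" where "cvec = (\<lambda>K. if subgroup K G then pI K else 0)"

lemma cvec_P: "cvec \<in> P (carrier G)"
proof -
  have "cvec \<in> Atil G (carrier G)"
    unfolding Atil_def cvec_def sle_carrier_iff using pinv conjg_subgroup by auto
  then show ?thesis using PG unfolding cvec_def by auto
qed

lemma nm_res_Atil: assumes a: "a \<in> Atil G (carrier G)" and H: "subgroup H G" and L: "subgroup L G" "H \<subseteq> L"
  shows "nm G L H (res G H a) \<in> Atil G L"
proof (rule Atil_quot)
  let ?d = "nm G L H (res G H cvec)"
  have "(\<lambda>I. a I * cvec I) \<in> P (carrier G)" using P_mult[OF subgroup_self a cvec_P] .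
  then have "res G H (\<lambda>I. a I * cvec I) \<in> P H" using P_res[OF H subgroup_self] H by (simp add: subgroup.subset)
  then have "nm G L H (res G H (\<lambda>I. a I * cvec I)) \<in> P L" using P_nm[OF H L] by simp
  then have "nm G L H (res G H (\<lambda>I. a I * cvec I)) \<in> Atil G L" using P_Atil[OF L(1)] by simp
  then show "(\<lambda>I. nm G L H (res G H a) I * ?d I) \<in> Atil G L" by (simp add: res_mult nm_mult_fun)
  have "res G H cvec \<in> P H" using P_res[OF H subgroup_self _ cvec_P] H by (simp add: subgroup.subset)
  then show "?d \<in> Atil G L" using P_nm[OF H L] P_Atil[OF L(1)] by simp
  show "\<forall>I. sle G I L \<longrightarrow> ?d I \<noteq> 0"
    using nm_res_nonzero[OF fin L(1) H L(2)] pI_nonzero unfolding cvec_def by simp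
  show "\<forall>I. \<not> sle G I L \<longrightarrow> nm G L H (res G H a) I = 0" by (simp add: nm_vanish)
qed

end

lemma arith1: fixes q x y A B :: int
  assumes "q dvd x * y" "m \<le> n" shows "q ^ m * A dvd x ^ m * A * (y ^ n * B)"
proof -
  have "q ^ m dvd (x * y) ^ m" using assms(1) by (rule dvd_power_same)
  also have "\<dots> = x ^ m * y ^ m" by (simp add: power_mult_distrib)
  also have "\<dots> dvd x ^ m * y ^ n" using assms(2) by (simp add: le_imp_power_dvd)
  finally have "q ^ m dvd x ^ m * y ^ n" .
  then have "q ^ m * A dvd x ^ m * y ^ n * (A * B)" by (rule mult_dvd_mono) simp
  then show ?thesis by (simp add: ac_simps)
qed

lemma arith2: fixes q x y A B :: int
  assumes "q dvd x * y" "n \<le> m" shows "q ^ n * B dvd x ^ m * A * (y ^ n * B)"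
  using arith1[of q y x n m B A] assms by (simp add: ac_simps)

context tset begin

lemma nk_use:
  assumes a: "a \<in> Atil G (carrier G)" and b: "b \<in> Atil G (carrier G)"
    and H: "\<And>L A B. subgroup L G \<Longrightarrow> subgroup A G \<Longrightarrow> subgroup B G \<Longrightarrow> A \<subseteq> L \<Longrightarrow> B \<subseteq> L \<Longrightarrow>
       (\<lambda>I. nm G L A (res G A a) I * nm G L B (res G B b) I) \<in> P L"
  shows "a \<in> P (carrier G) \<or> b \<in> P (carrier G)"
proof -
  have N: "\<forall>K1 K2 a b. subgroup K1 G \<longrightarrow> subgroup K2 G \<longrightarrow> a \<in> Atil G K1 \<longrightarrow> b \<in> Atil G K2 \<longrightarrow>
        (\<forall>L H1 H2 g1 g2. subgroup L G \<longrightarrow> subgroup H1 G \<longrightarrow> subgroup H2 G \<longrightarrow>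
           g1 \<in> carrier G \<longrightarrow> g2 \<in> carrier G \<longrightarrow> H1 \<subseteq> K1 \<longrightarrow> H2 \<subseteq> K2 \<longrightarrow>
           conjg G g1 H1 \<subseteq> L \<longrightarrow> conjg G g2 H2 \<subseteq> L \<longrightarrow>
           (\<lambda>I. nm G L (conjg G g1 H1) (cg G g1 H1 (res G H1 a)) I *
                nm G L (conjg G g2 H2) (cg G g2 H2 (res G H2 b)) I) \<in> P L) \<longrightarrow>
        a \<in> P K1 \<or> b \<in> P K2"
    using nk unfolding nakaoka_prime_def by (elim conjE)
  have "\<forall>L H1 H2 g1 g2. subgroup L G \<longrightarrow> subgroup H1 G \<longrightarrow> subgroup H2 G \<longrightarrow>
           g1 \<in> carrier G \<longrightarrow> g2 \<in> carrier G \<longrightarrow> H1 \<subseteq> carrier G \<longrightarrow> H2 \<subseteq> carrier G \<longrightarrow>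
           conjg G g1 H1 \<subseteq> L \<longrightarrow> conjg G g2 H2 \<subseteq> L \<longrightarrow>
           (\<lambda>I. nm G L (conjg G g1 H1) (cg G g1 H1 (res G H1 a)) I *
                nm G L (conjg G g2 H2) (cg G g2 H2 (res G H2 b)) I) \<in> P L"
  proof (intro allI impI)
    fix L H1 H2 g1 g2
    assume as: "subgroup L G" "subgroup H1 G" "subgroup H2 G" "g1 \<in> carrier G" "g2 \<in> carrier G"
      "H1 \<subseteq> carrier G" "H2 \<subseteq> carrier G" "conjg G g1 H1 \<subseteq> L" "conjg G g2 H2 \<subseteq> L"
    show "(\<lambda>I. nm G L (conjg G g1 H1) (cg G g1 H1 (res G H1 a)) I *
                nm G L (conjg G g2 H2) (cg G g2 H2 (res G H2 b)) I) \<in> P L"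
      unfolding cg_res[OF a as(4) as(2)] cg_res[OF b as(5) as(3)]
      by (rule H[OF as(1) conjg_subgroup[OF as(4,2)] conjg_subgroup[OF as(5,3)] as(8,9)])
  qed
  then show ?thesis using N subgroup_self a b by blast
qed

lemma pI_prime: assumes I0: "subgroup I0 G" and dv: "pI I0 dvd x * y"
  shows "pI I0 dvd x \<or> pI I0 dvd y"
proof (rule ccontr)
  assume nd: "\<not> (pI I0 dvd x \<or> pI I0 dvd y)"
  define q where "q = pI I0"
  define E where "E = (\<lambda>K. if K \<in> cls G (carrier G) I0 then (1::int) else 0)"
  have I0c: "I0 \<subseteq> carrier G" using I0 by (rule subgroup.subset)
  have sI0: "sle G I0 (carrier G)" using I0 sle_carrier_iff by simp
  have EA: "E \<in> Atil G (carrier G)" unfolding E_def by (rule ind_Atil[OF subgroup_self I0c])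
  have E1: "E I0 = 1" unfolding E_def using self_cls[OF sI0 subgroup_self] by simp
  have scaleP: "(\<lambda>K. c * E K) \<in> P (carrier G) \<longleftrightarrow> q dvd c" for c
  proof
    assume "(\<lambda>K. c * E K) \<in> P (carrier G)"
    then have "pI I0 dvd c * E I0" using PG I0 by auto
    then show "q dvd c" using E1 q_def by simp
  next
    assume qc: "q dvd c"
    have "pI I dvd c * E I" if "subgroup I G" for I
    proof (cases "I \<in> cls G (carrier G) I0")
      case True
      then obtain h where "h \<in> carrier G" "I = conjg G h I0" unfolding cls_def by blast
      then have "pI I = q" using pinv I0 q_def by simp
      then show ?thesis using qc by simp
    qed (simp add: E_def)
    then show "(\<lambda>K. c * E K) \<in> P (carrier G)" using PG Atil_scale[OF EA] by simp
  qed
  have "(\<lambda>K. x * E K) \<in> P (carrier G) \<or> (\<lambda>K. y * E K) \<in> P (carrier G)"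
  proof (rule nk_use[OF Atil_scale[OF EA] Atil_scale[OF EA]])
    fix L A B assume L: "subgroup L G" and A: "subgroup A G" and B: "subgroup B G"
      and AL: "A \<subseteq> L" and BL: "B \<subseteq> L"
    let ?Y = "\<lambda>I. nm G L A (res G A (\<lambda>K. x * E K)) I * nm G L B (res G B (\<lambda>K. y * E K)) I"
    show "?Y \<in> P L"
    proof (rule coord_lemma[OF fin L ideal_P[OF L]])
      show "?Y \<in> Atil G L"
        by (rule Atil_mult[OF nm_res_Atil[OF Atil_scale[OF EA] A L AL] nm_res_Atil[OF Atil_scale[OF EA] B L BL]])
      have qE: "(\<lambda>K. q * E K) \<in> P (carrier G)" using scaleP by simp
      have zA: "nm G L A (res G A (\<lambda>K. q * E K)) \<in> P L"
        using P_nm[OF A L AL P_res[OF A subgroup_self subgroup.subset[OF A] qE]] .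
      have zB: "nm G L B (res G B (\<lambda>K. q * E K)) \<in> P L"
        using P_nm[OF B L BL P_res[OF B subgroup_self subgroup.subset[OF B] qE]] .
      show "\<forall>J. sle G J L \<longrightarrow> (\<exists>z\<in>P L. z J dvd ?Y J)"
      proof (intro allI impI)
        fix J
        let ?m = "card {dcos G J g A | g. g \<in> L}"
        let ?n = "card {dcos G J g B | g. g \<in> L}"
        have Yv: "?Y J = x ^ ?m * nm G L A (res G A E) J * (y ^ ?n * nm G L B (res G B E) J)"
          by (simp add: res_scale nm_scale)
        have zAv: "nm G L A (res G A (\<lambda>K. q * E K)) J = q ^ ?m * nm G L A (res G A E) J"
          by (simp add: res_scale nm_scale)
        have zBv: "nm G L B (res G B (\<lambda>K. q * E K)) J = q ^ ?n * nm G L B (res G B E) J"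
          by (simp add: res_scale nm_scale)
        have qd: "q dvd x * y" using dv q_def by simp
        show "\<exists>z\<in>P L. z J dvd ?Y J"
        proof (cases "?m \<le> ?n")
          case True
          then show ?thesis using zA zAv Yv arith1[OF qd True] by (intro bexI[OF _ zA]) simp
        next
          case False
          then have "?n \<le> ?m" by simp
          then show ?thesis using zB zBv Yv arith2[OF qd] by (intro bexI[OF _ zB]) simp
        qed
      qed
    qed
  qed
  then show False using scaleP nd q_def by simp
qed

lemma pI_dvd_p: assumes I0: "subgroup I0 G" shows "pI I0 dvd p"
proof -
  obtain n where n: "pI I0 dvd p ^ n" using pI_dvd_pow[OF I0] by blast
  then show ?thesis
  proof (induction n)
    case 0
    then have "pI I0 dvd 1" by simp
    then show ?case using dvd_trans one_dvd by blast
  next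
    case (Suc n)
    then have "pI I0 dvd p \<or> pI I0 dvd p ^ n" using pI_prime[OF I0, of p "p ^ n"] by simp
    then show ?case using Suc.IH by blast
  qed
qed

lemma pI_cases: assumes I0: "subgroup I0 G" shows "pI I0 = 1 \<or> pI I0 = p"
  using pI_dvd_p[OF I0] pos I0 pp unfolding prime_int_iff by auto

end

context group begin

lemma lcos_self: assumes "subgroup N G" "k \<in> N" shows "lcos G k N = N"
proof -
  interpret N: subgroup N G by fact
  have kc: "k \<in> carrier G" using assms(2) N.subset by blast
  have "lcos G k N \<subseteq> N" unfolding lcos_def using assms(2) by (auto simp: N.m_closed)
  moreover have "N \<subseteq> lcos G k N"
  proof
    fix x assume x: "x \<in> N"
    have xc: "x \<in> carrier G" using x N.subset by blast
    have "inv k \<otimes> x \<in> N" using x assms(2) by (simp add: N.m_closed N.m_inv_closed)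
    moreover have "x = k \<otimes> (inv k \<otimes> x)" using kc xc by simp
    ultimately show "x \<in> lcos G k N" unfolding lcos_def by (rule image_eqI[rotated])
  qed
  ultimately show ?thesis by blast
qed

lemma normalizer_subgroup: assumes "J \<subseteq> carrier G"
  shows "subgroup {g \<in> carrier G. conjg G g J = J} G"
proof (rule subgroup.intro)
  show "{g \<in> carrier G. conjg G g J = J} \<subseteq> carrier G" by blast
next
  fix x y assume "x \<in> {g \<in> carrier G. conjg G g J = J}" "y \<in> {g \<in> carrier G. conjg G g J = J}"
  then show "x \<otimes> y \<in> {g \<in> carrier G. conjg G g J = J}"
    using conjg_comp[of x y J] assms by simp
next
  show "\<one> \<in> {g \<in> carrier G. conjg G g J = J}" using conjg_one[OF assms] by simp
next
  fix x assume x: "x \<in> {g \<in> carrier G. conjg G g J = J}"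
  then have "conjg G (inv x) J = conjg G (inv x) (conjg G x J)" by simp
  also have "\<dots> = J" using x assms by (intro conjg_inv_conjg) auto
  finally show "inv x \<in> {g \<in> carrier G. conjg G g J = J}" using x by simp
qed

end

context tset begin

lemma p_dvd:
  assumes H: "subgroup H G" and a: "a \<in> P H" and sJ: "sle G J H" and pJ: "pI J \<noteq> 1"
  shows "p dvd a J"
proof -
  have J: "subgroup J G" and JH: "J \<subseteq> H" using sJ unfolding sle_def by auto
  have Jc: "J \<subseteq> carrier G" using J by (rule subgroup.subset)
  have finJ: "finite J" using fin Jc by (rule finite_subset[rotated])
  have sJJ: "sle G J J" unfolding sle_def using J by simp
  define v where "v = a J"
  have b1: "res G J a \<in> P J" using P_res[OF J H JH a] .
  define \<delta> where "\<delta> = (\<lambda>K. if K = J then (1::int) else 0)"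
  have \<delta>A: "\<delta> \<in> Atil G J"
    unfolding Atil_def
  proof (intro CollectI conjI allI impI ballI)
    fix I assume "\<not> sle G I J" then show "\<delta> I = 0" using sJJ unfolding \<delta>_def by auto
  next
    fix h I assume h: "h \<in> J" and I: "sle G I J"
    have hc: "h \<in> carrier G" using sub_carrier[OF J h] .
    have "conjg G h I = J \<longleftrightarrow> I = J"
    proof
      assume "conjg G h I = J"
      then have "I = conjg G (inv h) J" using conjg_inv_conjg[OF hc sle_carrier[OF I]] by simp
      also have "\<dots> = J" using conjg_self[OF J] h J by (simp add: subgroup.m_inv_closed)
      finally show "I = J" .
    qed (simp add: conjg_self[OF J h])
    then show "\<delta> (conjg G h I) = \<delta> I" unfolding \<delta>_def by simp
  qed
  define b2 where "b2 = (\<lambda>K. if K = J then v else 0)"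
  have "b2 = (\<lambda>K. \<delta> K * res G J a K)" unfolding b2_def \<delta>_def v_def res_def using sJJ by auto
  then have b2P: "b2 \<in> P J" using P_mult[OF J \<delta>A b1] by simp
  define N where "N = {g \<in> carrier G. conjg G g J = J}"
  have N: "subgroup N G" unfolding N_def by (rule normalizer_subgroup[OF Jc])
  have JN: "J \<subseteq> N" unfolding N_def using conjg_self[OF J] sub_carrier[OF J] by auto
  have Nc: "N \<subseteq> carrier G" unfolding N_def by auto
  have Ninv: "g \<in> N \<Longrightarrow> conjg G (inv g) J = J" for g
    using subgroup.m_inv_closed[OF N] unfolding N_def by auto
  define b3 where "b3 = nm G N J b2"
  have b3P: "b3 \<in> P N" unfolding b3_def using P_nm[OF J N JN b2P] .
  define m where "m = card {dcos G J g J | g. g \<in> N}"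
  have b3J: "b3 J = v ^ m"
  proof -
    have sJN: "sle G J N" unfolding sle_def using J JN by simp
    have "b3 J = (\<Prod>D\<in>{dcos G J g J | g. g \<in> N}. v)"
      unfolding b3_def nm_def if_P[OF sJN]
    proof (intro prod.cong refl)
      fix D assume "D \<in> {dcos G J g J | g. g \<in> N}"
      then obtain g where g: "g \<in> N" "D = dcos G J g J" by blast
      have "(SOME x. x \<in> D) \<in> N" using dcos_some_N[OF J J g(1) N JN JN] g(2) by simp
      then show "(let g = SOME g. g \<in> D in b2 (conjg G (inv g) J \<inter> J)) = v"
        using Ninv unfolding b2_def Let_def by simp
    qed
    then show ?thesis unfolding m_def by simp
  qed
  have b3K: "b3 K = 0" if sK: "sle G K N" and KJ: "K \<noteq> J" and cK: "card K = card J" for K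
  proof -
    have K: "subgroup K G" "K \<subseteq> N" using sK unfolding sle_def by auto
    have Kc: "K \<subseteq> carrier G" using K(1) by (rule subgroup.subset)
    have finK: "finite K" using fin Kc by (rule finite_subset[rotated])
    let ?S = "{dcos G K g J | g. g \<in> N}"
    have D0: "dcos G K \<one> J \<in> ?S" using subgroup.one_closed[OF N] by blast
    let ?x = "SOME x. x \<in> dcos G K \<one> J"
    have xN: "?x \<in> N" using dcos_some_N[OF K(1) J subgroup.one_closed[OF N] N K(2) JN] .
    have xc: "?x \<in> carrier G" using xN Nc by blast
    have "b2 (conjg G (inv ?x) K \<inter> J) = 0"
    proof (rule ccontr)
      assume "b2 (conjg G (inv ?x) K \<inter> J) \<noteq> 0"
      then have "conjg G (inv ?x) K \<inter> J = J" unfolding b2_def by (simp split: if_splits)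
      then have "J \<subseteq> conjg G (inv ?x) K" by blast
      then have "conjg G ?x J \<subseteq> conjg G ?x (conjg G (inv ?x) K)" by (rule conjg_mono)
      also have "\<dots> = K" using conjg_conjg_inv[OF xc Kc] .
      finally have "J \<subseteq> K" using xN unfolding N_def by simp
      then have "J = K" using card_subset_eq[OF finK] cK by simp
      then show False using KJ by simp
    qed
    then have "(\<Prod>D\<in>?S. (let g = SOME g. g \<in> D in b2 (conjg G (inv g) K \<inter> J))) = 0"
      using finite_dcos_set[OF fin N K(2) JN] D0 by (subst prod_zero_iff) (auto simp: Let_def intro!: bexI[OF _ D0])
    then show ?thesis unfolding b3_def nm_def by simp
  qed
  define b4 where "b4 = tr G (carrier G) N b3"
  have b4P: "b4 \<in> P (carrier G)" unfolding b4_def using P_tr[OF N subgroup_self Nc b3P] .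
  let ?Cs = "{lcos G k N | k. k \<in> carrier G}"
  let ?f = "\<lambda>C. (let k = (SOME k. k \<in> C) in
            if conjg G (inv k) J \<subseteq> N then b3 (conjg G (inv k) J) else 0)"
  have finCs: "finite ?Cs"
  proof -
    have "?Cs \<subseteq> Pow (carrier G)" unfolding lcos_def using Nc by auto
    then show ?thesis using fin by (meson finite_Pow_iff finite_subset)
  qed
  have NCs: "N \<in> ?Cs" using lcos_self[OF N subgroup.one_closed[OF N]] by force
  have fN: "?f N = v ^ m"
  proof -
    have "(SOME k. k \<in> N) \<in> N" using subgroup.one_closed[OF N] by (rule someI)
    then show ?thesis using Ninv JN b3J unfolding Let_def by simp
  qed
  have fC: "?f C = 0" if C: "C \<in> ?Cs" "C \<noteq> N" for C
  proof -
    obtain k0 where k0: "k0 \<in> carrier G" "C = lcos G k0 N" using C(1) by blast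
    have "k0 \<in> C" unfolding k0(2) lcos_def using subgroup.one_closed[OF N] k0(1) by force
    then have kC: "(SOME k. k \<in> C) \<in> C" by (rule someI)
    let ?k = "SOME k. k \<in> C"
    obtain n where n: "n \<in> N" "?k = k0 \<otimes> n" using kC unfolding k0(2) lcos_def by blast
    have nc: "n \<in> carrier G" using n(1) Nc by blast
    have kc: "?k \<in> carrier G" using n k0(1) nc by simp
    have kN: "?k \<notin> N"
    proof
      assume "?k \<in> N"
      then have "?k \<otimes> inv n \<in> N" using n(1) by (simp add: subgroup.m_closed[OF N] subgroup.m_inv_closed[OF N])
      moreover have "?k \<otimes> inv n = k0" using n(2) k0(1) nc by (simp add: m_assoc)
      ultimately have "k0 \<in> N" by simp
      then show False using lcos_self[OF N] k0(2) C(2) by simp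
    qed
    let ?K = "conjg G (inv ?k) J"
    show ?thesis
    proof (cases "?K \<subseteq> N")
      case True
      have sK: "sle G ?K N" unfolding sle_def using conjg_subgroup[OF inv_closed[OF kc] J] True by simp
      have cK: "card ?K = card J" using conjg_card[OF inv_closed[OF kc] Jc] .
      have KJ: "?K \<noteq> J"
      proof
        assume "?K = J"
        then have "inv ?k \<in> N" unfolding N_def using kc by simp
        then have "inv (inv ?k) \<in> N" by (simp add: subgroup.m_inv_closed[OF N])
        then show False using kN kc by simp
      qed
      show ?thesis using b3K[OF sK KJ cK] True unfolding Let_def by simp
    qed (simp add: Let_def)
  qed
  have "b4 J = (\<Sum>C\<in>?Cs. ?f C)"
    unfolding b4_def tr_def using sle_carrier_iff J by simp
  also have "\<dots> = ?f N + (\<Sum>C\<in>?Cs - {N}. ?f C)" using sum.remove[OF finCs NCs] .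
  also have "(\<Sum>C\<in>?Cs - {N}. ?f C) = 0" using fC by (intro sum.neutral) auto
  finally have "b4 J = v ^ m" using fN by simp
  moreover have "pI J dvd b4 J" using b4P PG J by auto
  moreover have "pI J = p" using pI_cases[OF J] pJ by simp
  ultimately have "p dvd v ^ m" by simp
  then show ?thesis using prime_dvd_power[OF pp] v_def by simp
qed

lemma main: assumes H: "subgroup H G"
  shows "P H = Pfp G {I. subgroup I G \<and> pI I \<noteq> 1} p H"
proof
  show "P H \<subseteq> Pfp G {I. subgroup I G \<and> pI I \<noteq> 1} p H"
  proof
    fix a assume a: "a \<in> P H"
    have "(if I \<in> {I. subgroup I G \<and> pI I \<noteq> 1} then p else 1) dvd a I" if "sle G I H" for I
      using p_dvd[OF H a that] by simp
    then show "a \<in> Pfp G {I. subgroup I G \<and> pI I \<noteq> 1} p H"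
      unfolding Pfp_def using P_Atil[OF H a] by simp
  qed
next
  show "Pfp G {I. subgroup I G \<and> pI I \<noteq> 1} p H \<subseteq> P H"
  proof
    fix y assume y: "y \<in> Pfp G {I. subgroup I G \<and> pI I \<noteq> 1} p H"
    have yA: "y \<in> Atil G H" using y unfolding Pfp_def by simp
    have ydv: "pI K dvd y K" if sK: "sle G K H" for K
    proof -
      have K: "subgroup K G" using sK unfolding sle_def by simp
      have "(if K \<in> {I. subgroup I G \<and> pI I \<noteq> 1} then p else 1) dvd y K"
        using y sK unfolding Pfp_def by simp
      then show ?thesis using pI_cases[OF K] K by auto
    qed
    have z: "res G H cvec \<in> P H" using P_res[OF H subgroup_self subgroup.subset[OF H] cvec_P] .
    define r where "r = (\<lambda>K. if sle G K H then y K div pI K else 0)"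
    have rA: "r \<in> Atil G H"
      unfolding Atil_def
    proof (intro CollectI conjI allI impI ballI)
      fix I assume "\<not> sle G I H" then show "r I = 0" unfolding r_def by simp
    next
      fix h I assume h: "h \<in> H" and I: "sle G I H"
      have "sle G (conjg G h I) H" using sle_conjg[OF H h I] .
      moreover have "y (conjg G h I) = y I" using AtilD2[OF yA h I] .
      moreover have "pI (conjg G h I) = pI I" using pinv sub_carrier[OF H h] I unfolding sle_def by simp
      ultimately show "r (conjg G h I) = r I" unfolding r_def using I by simp
    qed
    have "y = (\<lambda>K. r K * res G H cvec K)"
    proof
      fix K show "y K = r K * res G H cvec K"
      proof (cases "sle G K H")
        case True
        then have "subgroup K G" unfolding sle_def by simp
        then show ?thesis using True ydv[OF True] unfolding r_def res_def cvec_def by simp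
      qed (simp add: r_def AtilD1[OF yA])
    qed
    then show "y \<in> P H" using P_mult[OF H rA z] by simp
  qed
qed

end

theorem corollary4p11:
  fixes G :: "('a, 'b) monoid_scheme" and P :: "'a set \<Rightarrow> ('a set \<Rightarrow> int) set"
    and p :: int and pI :: "'a set \<Rightarrow> int"
  assumes "group G" and "finite (carrier G)"
    and "nakaoka_prime G P"
    and "prime p"
    and "P {\<one>\<^bsub>G\<^esub>} = {a \<in> Atil G {\<one>\<^bsub>G\<^esub>}. p dvd a {\<one>\<^bsub>G\<^esub>}}"
    and "\<forall>I. subgroup I G \<longrightarrow> pI I \<ge> 0"
    and "\<forall>g\<in>carrier G. \<forall>I. subgroup I G \<longrightarrow> pI (conjg G g I) = pI I"
    and "P (carrier G) = {a \<in> Atil G (carrier G). \<forall>I. subgroup I G \<longrightarrow> pI I dvd a I}"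
  shows "\<forall>H. subgroup H G \<longrightarrow> P H = Pfp G {I. subgroup I G \<and> pI I \<noteq> 1} p H"
proof -
  interpret T: tset G P p pI
    using assms unfolding tset_def tset_axioms_def by simp
  show ?thesis using T.main by blast
qed

end
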